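(* For every $n\ge 2$, the sensitivity to synchronism of elementary cellular automaton rule $170$ satisfies $\mu(f_{170,n})=\dfrac{2^n-1}{3^n-2^{n+1}+2}$.
   Context: Cells are indexed by $\mathbb{Z}_n=\{0,\dots,n-1\}$, indices modulo $n$. Rule $170$ has local rule $r_{170}(x_1,x_2,x_3)=x_3$ and global function $f_{170,n}(x)_i=r_{170}(x_{i-1},x_i,x_{i+1})=x_{i+1}$. An update schedule is an ordered partition $\Delta=(\Delta_1,\dots,\Delta_k)$ of $\mathbb{Z}_n$ into nonempty blocks; $\mathcal{P}_n$ is the set of them. For a block $B$ let $f^{(B)}(x)_i=f_{170,n}(x)_i$ if $i\in B$ and $x_i$ otherwise; $f^{(\Delta)}_{170,n}=f^{(\Delta_k)}\circ\cdots\circ f^{(\Delta_1)}$. The dynamics of $\Delta$ is the transition digraph with arcs $(x,f^{(\Delta)}_{170,n}(x))$; $\mathcal{D}(f_{170,n})$ is the set of distinct dynamics over $\Delta\in\mathcal{P}_n$. The sensitivity to synchronism is $\mu(f_{170,n})=|\mathcal{D}(f_{170,n})|/(3^n-2^{n+1}+2)$. *)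

theory Defs
  imports Main "HOL.Real"
begin

definition configs :: "nat \<Rightarrow> (nat \<Rightarrow> bool) set" where
  "configs n = {x. \<forall>i. n \<le> i \<longrightarrow> \<not> x i}"

definition r170 :: "bool \<Rightarrow> bool \<Rightarrow> bool \<Rightarrow> bool" where
  "r170 x1 x2 x3 = x3"

definition f170 :: "nat \<Rightarrow> (nat \<Rightarrow> bool) \<Rightarrow> (nat \<Rightarrow> bool)" where
  "f170 n x i = (if i < n then r170 (x ((i + n - 1) mod n)) (x i) (x ((i + 1) mod n)) else False)"

definition block_update :: "nat \<Rightarrow> nat set \<Rightarrow> (nat \<Rightarrow> bool) \<Rightarrow> (nat \<Rightarrow> bool)" where
  "block_update n B x i = (if i \<in> B then f170 n x i else x i)"

definition ordered_partitions :: "nat \<Rightarrow> nat set list set" where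
  "ordered_partitions n = {D. (\<forall>i<length D. D ! i \<noteq> {})
      \<and> (\<forall>i<length D. \<forall>j<length D. i \<noteq> j \<longrightarrow> D ! i \<inter> D ! j = {})
      \<and> \<Union>(set D) = {0..<n}}"

text \<open>f^(Delta) = f^(Delta_k) o ... o f^(Delta_1): fold applies Delta_1 first.\<close>
definition schedule_update :: "nat \<Rightarrow> nat set list \<Rightarrow> (nat \<Rightarrow> bool) \<Rightarrow> (nat \<Rightarrow> bool)" where
  "schedule_update n D x = fold (\<lambda>B y. block_update n B y) D x"

text \<open>Dynamics: transition digraph on configs n, represented by its arc set.\<close>
definition dynamics :: "nat \<Rightarrow> nat set list \<Rightarrow> ((nat \<Rightarrow> bool) \<times> (nat \<Rightarrow> bool)) set" where
  "dynamics n D = {(x, schedule_update n D x) | x. x \<in> configs n}"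

definition dynamics_set :: "nat \<Rightarrow> ((nat \<Rightarrow> bool) \<times> (nat \<Rightarrow> bool)) set set" where
  "dynamics_set n = dynamics n ` ordered_partitions n"

definition sensitivity :: "nat \<Rightarrow> real" where
  "sensitivity n = real (card (dynamics_set n)) / ((3::real) ^ n - 2 ^ (n + 1) + 2)"

end

theory Submission
  imports Defs
begin

definition dd :: "nat \<Rightarrow> nat set \<Rightarrow> nat \<Rightarrow> nat" where
  "dd n S i = (LEAST k. (i + k) mod n \<notin> S)"

definition FF :: "nat \<Rightarrow> nat set \<Rightarrow> (nat \<Rightarrow> bool) \<Rightarrow> (nat \<Rightarrow> bool)" where
  "FF n S x i = (if i < n then x ((i + dd n S i + 1) mod n) else False)"

definition GG :: "nat \<Rightarrow> nat set \<Rightarrow> ((nat \<Rightarrow> bool) \<times> (nat \<Rightarrow> bool)) set" where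
  "GG n S = {(x, FF n S x) | x. x \<in> configs n}"

definition idx :: "nat set list \<Rightarrow> nat \<Rightarrow> nat" where
  "idx D j = (THE t. t < length D \<and> j \<in> D ! t)"

definition SD :: "nat \<Rightarrow> nat set list \<Rightarrow> nat set" where
  "SD n D = {j. j < n \<and> idx D ((j + 1) mod n) < idx D j}"

lemma dd_props:
  assumes "j < n" "j \<notin> S" "i < n"
  shows "(i + dd n S i) mod n \<notin> S \<and> dd n S i < n"
proof -
  define k where "k = (j + n - i) mod n"
  have k: "(i + k) mod n = j"
  proof -
    have "(i + k) mod n = (i + (j + n - i)) mod n" unfolding k_def by (simp add: mod_add_right_eq)
    also have "\<dots> = (j + n) mod n" using assms by simp
    finally show ?thesis using assms by simp
  qed
  have kn: "k < n" unfolding k_def using assms by simp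
  have P: "(i + k) mod n \<notin> S" using k assms by simp
  show ?thesis unfolding dd_def
    using LeastI[of "\<lambda>k. (i + k) mod n \<notin> S", OF P] Least_le[of "\<lambda>k. (i + k) mod n \<notin> S", OF P] kn
    by auto
qed

lemma dd_zero: "i < n \<Longrightarrow> i \<notin> S \<Longrightarrow> dd n S i = 0"
  unfolding dd_def by (rule Least_eq_0) simp

lemma dd_suc:
  assumes "j < n" "j \<notin> S" "i < n" "i \<in> S"
  shows "dd n S i = Suc (dd n S ((i + 1) mod n))"
proof -
  have P: "(i + dd n S i) mod n \<notin> S" using dd_props[OF assms(1-3)] by simp
  have "dd n S i = Suc (LEAST m. (i + Suc m) mod n \<notin> S)"
    unfolding dd_def
    by (rule Least_Suc) (use P assms in \<open>auto simp: dd_def\<close>)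
  also have "(LEAST m. (i + Suc m) mod n \<notin> S) = dd n S ((i + 1) mod n)"
    unfolding dd_def by (simp add: mod_add_left_eq)
  finally show ?thesis .
qed

lemma unique_sol:
  assumes wit: "j < n" "j \<notin> S"
    and E: "\<forall>i<n. y i = (if i \<in> S then y ((i + 1) mod n) else x ((i + 1) mod n))"
    and E2: "\<forall>i\<ge>n. y i = False"
  shows "y = FF n S x"
proof -
  have "\<forall>i<n. dd n S i = k \<longrightarrow> y i = FF n S x i" for k
  proof (induction k)
    case 0
    show ?case
    proof (intro allI impI)
      fix i assume i: "i < n" "dd n S i = 0"
      have "i \<notin> S" using dd_props[OF wit i(1)] i by simp
      then show "y i = FF n S x i" using E i by (simp add: FF_def)
    qed
  next
    case (Suc k)
    show ?case
    proof (intro allI impI)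
      fix i assume i: "i < n" "dd n S i = Suc k"
      have iS: "i \<in> S" using dd_zero[of i n S] i by auto
      have d: "dd n S ((i + 1) mod n) = k" using dd_suc[OF wit i(1) iS] i by simp
      have n0: "0 < n" using i by simp
      have "y i = y ((i + 1) mod n)" using E i iS by simp
      also have "\<dots> = FF n S x ((i + 1) mod n)" using Suc.IH d n0 by simp
      also have "\<dots> = x (((i + 1) mod n + k + 1) mod n)" using n0 d by (simp add: FF_def)
      also have "((i + 1) mod n + k + 1) mod n = (i + dd n S i + 1) mod n"
      proof -
        have "((i + 1) mod n + (k + 1)) mod n = ((i + 1) + (k + 1)) mod n" by (rule mod_add_left_eq)
        then show ?thesis using i by (simp add: add.assoc)
      qed
      finally show "y i = FF n S x i" using i by (simp add: FF_def)
    qed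
  qed
  note H = this
  show ?thesis
  proof (rule ext)
    fix i
    show "y i = FF n S x i"
    proof (cases "i < n")
      case True
      then show ?thesis using H[of "dd n S i"] by simp
    next
      case False
      then show ?thesis using E2 by (simp add: FF_def)
    qed
  qed
qed

lemma idx_props:
  assumes D: "D \<in> ordered_partitions n" and j: "j < n"
  shows "idx D j < length D \<and> j \<in> D ! idx D j"
    and "\<And>t. t < length D \<Longrightarrow> j \<in> D ! t \<Longrightarrow> idx D j = t"
proof -
  have "j \<in> \<Union>(set D)" using D j by (simp add: ordered_partitions_def)
  then obtain B where B: "B \<in> set D" "j \<in> B" by blast
  then obtain t where t: "t < length D" "j \<in> D ! t" by (metis in_set_conv_nth)
  have disj: "\<forall>i<length D. \<forall>j<length D. i \<noteq> j \<longrightarrow> D ! i \<inter> D ! j = {}"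
    using D by (simp add: ordered_partitions_def)
  have uniq: "t' = t" if "t' < length D" "j \<in> D ! t'" for t'
  proof (rule ccontr)
    assume "t' \<noteq> t"
    then have "D ! t' \<inter> D ! t = {}" using disj that t by blast
    then show False using that t by blast
  qed
  have "idx D j = t" unfolding idx_def
    using t uniq by (intro the_equality) blast+
  then show "idx D j < length D \<and> j \<in> D ! idx D j" using t by simp
  show "\<And>t'. t' < length D \<Longrightarrow> j \<in> D ! t' \<Longrightarrow> idx D j = t'"
    using uniq \<open>idx D j = t\<close> by simp
qed

lemma blocks_sub:
  assumes D: "D \<in> ordered_partitions n" "t < length D" "i \<in> D ! t"
  shows "i < n"
proof -
  have "D ! t \<in> set D" using D by simp
  then have "i \<in> \<Union>(set D)" using D by blast
  moreover have "\<Union>(set D) = {0..<n}" using D by (simp add: ordered_partitions_def)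
  ultimately show ?thesis by simp
qed

lemma fold_inv:
  assumes D: "D \<in> ordered_partitions n" and x: "x \<in> configs n"
  shows "m \<le> length D \<Longrightarrow>
    (\<forall>i<n. fold (\<lambda>B y. block_update n B y) (take m D) x i =
       (if idx D i < m then (if idx D ((i + 1) mod n) < idx D i
          then fold (\<lambda>B y. block_update n B y) (take m D) x ((i + 1) mod n)
          else x ((i + 1) mod n)) else x i))
    \<and> (\<forall>i\<ge>n. fold (\<lambda>B y. block_update n B y) (take m D) x i = False)"
proof (induction m)
  case 0
  then show ?case using x by (simp add: configs_def)
next
  case (Suc m)
  define z where "z = fold (\<lambda>B y. block_update n B y) (take m D) x"
  have mD: "m < length D" using Suc by simp
  have IH1: "\<forall>i<n. z i = (if idx D i < m then (if idx D ((i + 1) mod n) < idx D i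
          then z ((i + 1) mod n) else x ((i + 1) mod n)) else x i)"
    and IH2: "\<forall>i\<ge>n. z i = False" using Suc unfolding z_def by auto
  have fz: "fold (\<lambda>B y. block_update n B y) (take (Suc m) D) x = block_update n (D ! m) z"
    unfolding z_def using mD by (simp add: take_Suc_conv_app_nth)
  have mem: "\<And>i. i < n \<Longrightarrow> i \<in> D ! m \<longleftrightarrow> idx D i = m"
    using idx_props[OF D] mD by metis
  have nmem: "\<And>i. i \<ge> n \<Longrightarrow> i \<notin> D ! m"
    using blocks_sub[OF D mD] by force
  define z' where "z' = block_update n (D ! m) z"
  have z'1: "\<And>i. i < n \<Longrightarrow> z' i = (if idx D i = m then z ((i + 1) mod n) else z i)"
    unfolding z'_def block_update_def f170_def r170_def using mem by simp
  have z'2: "\<And>i. i \<ge> n \<Longrightarrow> z' i = z i"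
    unfolding z'_def block_update_def using nmem by simp
  have A: "\<forall>i<n. z' i = (if idx D i < Suc m then (if idx D ((i + 1) mod n) < idx D i
          then z' ((i + 1) mod n) else x ((i + 1) mod n)) else x i)"
  proof (intro allI impI)
    fix i assume i: "i < n"
    have n0: "0 < n" using i by simp
    have i1: "(i + 1) mod n < n" using n0 by simp
    show "z' i = (if idx D i < Suc m then (if idx D ((i + 1) mod n) < idx D i
          then z' ((i + 1) mod n) else x ((i + 1) mod n)) else x i)"
      using z'1[OF i] z'1[OF i1] IH1 i i1 by auto
  qed
  have fz': "fold (\<lambda>B y. block_update n B y) (take (Suc m) D) x = z'"
    using fz unfolding z'_def by simp
  show ?case unfolding fz' using A z'2 IH2 by simp
qed

lemma SD_not_full:
  assumes D: "D \<in> ordered_partitions n" and n: "n > 0"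
  shows "SD n D \<noteq> {0..<n}"
proof
  assume full: "SD n D = {0..<n}"
  define M where "M = Min (idx D ` {0..<n})"
  have "M \<in> idx D ` {0..<n}" unfolding M_def using n by (intro Min_in) auto
  then obtain j where j: "j < n" "idx D j = M" by auto
  have "j \<in> SD n D" using full j by simp
  then have "idx D ((j + 1) mod n) < M" using j by (simp add: SD_def)
  moreover have "M \<le> idx D ((j + 1) mod n)" unfolding M_def using n by (intro Min_le) auto
  ultimately show False by simp
qed

lemma dyn_eq:
  assumes D: "D \<in> ordered_partitions n" and n: "n > 0"
  shows "dynamics n D = GG n (SD n D)"
proof -
  have "SD n D \<subseteq> {0..<n}" by (auto simp: SD_def)
  then obtain j where j: "j < n" "j \<notin> SD n D"
    using SD_not_full[OF D n] by (metis atLeast0LessThan lessThan_iff subsetI subset_antisym)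
  have "schedule_update n D x = FF n (SD n D) x" if x: "x \<in> configs n" for x
  proof -
    have "schedule_update n D x = fold (\<lambda>B y. block_update n B y) (take (length D) D) x"
      by (simp add: schedule_update_def)
    moreover note fold_inv[OF D x, of "length D"]
    ultimately have E1: "\<forall>i<n. schedule_update n D x i = (if i \<in> SD n D
        then schedule_update n D x ((i + 1) mod n) else x ((i + 1) mod n))"
      and E2: "\<forall>i\<ge>n. schedule_update n D x i = False"
      using idx_props(1)[OF D] by (auto simp: SD_def)
    show ?thesis by (rule unique_sol[OF j E1 E2])
  qed
  then show ?thesis unfolding dynamics_def GG_def by auto
qed


lemma SD_surj:
  assumes n: "n > 0" and Ssub: "S \<subseteq> {0..<n}" and Sne: "S \<noteq> {0..<n}"
  shows "\<exists>D\<in>ordered_partitions n. SD n D = S"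
proof -
  obtain j0 where j0: "j0 < n" "j0 \<notin> S" using Ssub Sne by (metis atLeast0LessThan lessThan_iff subsetI subset_antisym)
  define c where "c = dd n S"
  have down: "\<forall>j<n. c j = m + k \<longrightarrow> (\<exists>j'<n. c j' = m)" for m k
  proof (induction k)
    case 0 then show ?case by auto
  next
    case (Suc k)
    show ?case
    proof (intro allI impI)
      fix j assume j: "j < n" "c j = m + Suc k"
      have jS: "j \<in> S" using dd_zero[of j n S] j unfolding c_def by auto
      have "c ((j + 1) mod n) = m + k" using dd_suc[OF j0 j(1) jS] j unfolding c_def by simp
      moreover have "(j + 1) mod n < n" using n by simp
      ultimately show "\<exists>j'<n. c j' = m" using Suc.IH by blast
    qed
  qed
  define M where "M = Max (c ` {0..<n})"
  have "M \<in> c ` {0..<n}" unfolding M_def using n by (intro Max_in) auto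
  then obtain jM where jM: "jM < n" "c jM = M" by auto
  have cle: "c j \<le> M" if "j < n" for j unfolding M_def using that by (intro Max_ge) auto
  define D where "D = map (\<lambda>m. {j. j < n \<and> c j = m}) [0..<Suc M]"
  have lenD: "length D = Suc M" unfolding D_def by simp
  have Dnth: "D ! t = {j. j < n \<and> c j = t}" if "t < Suc M" for t
    unfolding D_def using that by (simp del: upt_Suc)
  have DOP: "D \<in> ordered_partitions n"
    unfolding ordered_partitions_def
  proof (intro CollectI conjI allI impI)
    fix i assume i: "i < length D"
    then have "i \<le> M" using lenD by simp
    then have "M = i + (M - i)" by simp
    then obtain j' where "j' < n" "c j' = i" using down[of i "M - i"] jM by metis
    then show "D ! i \<noteq> {}" using Dnth i lenD by auto
  next
    fix i j assume "i < length D" "j < length D" "i \<noteq> j"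
    then show "D ! i \<inter> D ! j = {}" using Dnth lenD by auto
  next
    show "\<Union>(set D) = {0..<n}"
    proof
      show "\<Union>(set D) \<subseteq> {0..<n}" unfolding D_def by auto
      show "{0..<n} \<subseteq> \<Union>(set D)"
      proof
        fix j assume "j \<in> {0..<n}"
        then have j: "j < n" by simp
        have "c j < length D" using cle[OF j] lenD by simp
        moreover have "j \<in> D ! c j" using Dnth cle[OF j] j by simp
        ultimately show "j \<in> \<Union>(set D)" by (metis UnionI nth_mem)
      qed
    qed
  qed
  have idxc: "idx D j = c j" if "j < n" for j
  proof -
    have "c j < length D" using cle[OF that] lenD by simp
    moreover have "j \<in> D ! c j" using Dnth cle[OF that] that by simp
    ultimately show ?thesis using idx_props(2)[OF DOP that] by blast
  qed
  have "SD n D = S"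
  proof (intro set_eqI iffI)
    fix j assume "j \<in> SD n D"
    then have j: "j < n" and lt: "c ((j + 1) mod n) < c j"
      unfolding SD_def using idxc n by auto
    show "j \<in> S"
    proof (rule ccontr)
      assume "j \<notin> S"
      then have "c j = 0" using dd_zero j unfolding c_def by simp
      then show False using lt by simp
    qed
  next
    fix j assume jS: "j \<in> S"
    then have j: "j < n" using Ssub by auto
    have "c j = Suc (c ((j + 1) mod n))" using dd_suc[OF j0 j jS] unfolding c_def by simp
    then show "j \<in> SD n D" unfolding SD_def using idxc j n by simp
  qed
  then show ?thesis using DOP by blast
qed

lemma mod_neq_aux:
  fixes a d n :: nat
  assumes "0 < d" "d < n"
  shows "(a + d) mod n \<noteq> a mod n"
proof
  assume "(a + d) mod n = a mod n"
  then have "n dvd (a + d) - a" using mod_eq_dvd_iff_nat[of a "a + d" n] by simp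
  then have "n dvd d" by simp
  then show False using assms nat_dvd_not_less by blast
qed

lemma GG_ne:
  assumes n: "n \<ge> 2" and i: "i < n" "i \<in> S1" "i \<notin> S2" and j: "j < n" "j \<notin> S1"
  shows "GG n S1 \<noteq> GG n S2"
proof
  assume eq: "GG n S1 = GG n S2"
  define x where "x = (\<lambda>k. k = (i + 1) mod n)"
  have xc: "x \<in> configs n" unfolding x_def configs_def using n by (auto dest: leD intro: mod_less_divisor)
  have "(x, FF n S2 x) \<in> GG n S1" using eq xc unfolding GG_def by auto
  then have F: "FF n S2 x = FF n S1 x" unfolding GG_def by auto
  have "FF n S2 x i = True" using dd_zero[OF i(1) i(3)] i unfolding FF_def x_def by simp
  moreover have "FF n S1 x i = False"
  proof -
    define d where "d = dd n S1 i"
    have d1: "d < n" using dd_props[OF j i(1)] unfolding d_def by simp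
    have d0: "d > 0"
    proof (rule ccontr)
      assume "\<not> d > 0"
      then have "d = 0" by simp
      then show False using dd_props[OF j i(1)] i unfolding d_def by simp
    qed
    have "((i + 1) + d) mod n \<noteq> (i + 1) mod n" by (rule mod_neq_aux[OF d0 d1])
    then show ?thesis unfolding FF_def x_def d_def[symmetric] using i by (simp add: add.commute add.left_commute)
  qed
  ultimately show False using F by simp
qed

theorem mainTheorem3:
  fixes n :: nat
  assumes "n \<ge> 2"
  shows "sensitivity n = ((2::real) ^ n - 1) / ((3::real) ^ n - 2 ^ (n + 1) + 2)"
proof -
  have n: "n > 0" using assms by simp
  define V where "V = Pow {0..<n} - {{0..<n}}"
  have SDimg: "SD n ` ordered_partitions n = V"
  proof
    show "SD n ` ordered_partitions n \<subseteq> V"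
      unfolding V_def using SD_not_full[OF _ n] by (auto simp: SD_def)
    show "V \<subseteq> SD n ` ordered_partitions n"
      unfolding V_def using SD_surj[OF n] by blast
  qed
  have ds: "dynamics_set n = GG n ` V"
  proof -
    have "dynamics_set n = (\<lambda>D. GG n (SD n D)) ` ordered_partitions n"
      unfolding dynamics_set_def using dyn_eq[OF _ n] by (intro image_cong) auto
    also have "\<dots> = GG n ` (SD n ` ordered_partitions n)" by (simp add: image_image)
    finally show ?thesis using SDimg by simp
  qed
  have inj: "inj_on (GG n) V"
  proof (rule inj_onI)
    fix S1 S2 assume S1: "S1 \<in> V" and S2: "S2 \<in> V" and eq: "GG n S1 = GG n S2"
    show "S1 = S2"
    proof (rule ccontr)
      assume ne: "S1 \<noteq> S2"
      have w1: "\<exists>j<n. j \<notin> S1" using S1 unfolding V_def by (metis Diff_iff PowD atLeast0LessThan lessThan_iff singletonI subsetI subset_antisym)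
      have w2: "\<exists>j<n. j \<notin> S2" using S2 unfolding V_def by (metis Diff_iff PowD atLeast0LessThan lessThan_iff singletonI subsetI subset_antisym)
      have sub1: "S1 \<subseteq> {0..<n}" and sub2: "S2 \<subseteq> {0..<n}" using S1 S2 unfolding V_def by auto
      from ne have "(\<exists>i. i \<in> S1 \<and> i \<notin> S2) \<or> (\<exists>i. i \<in> S2 \<and> i \<notin> S1)" by blast
      then show False
      proof
        assume "\<exists>i. i \<in> S1 \<and> i \<notin> S2"
        then obtain i where "i \<in> S1" "i \<notin> S2" by blast
        moreover have "i < n" using sub1 \<open>i \<in> S1\<close> by auto
        ultimately show False using GG_ne[OF assms] w1 eq by metis
      next
        assume "\<exists>i. i \<in> S2 \<and> i \<notin> S1"
        then obtain i where "i \<in> S2" "i \<notin> S1" by blast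
        moreover have "i < n" using sub2 \<open>i \<in> S2\<close> by auto
        ultimately show False using GG_ne[OF assms] w2 eq by metis
      qed
    qed
  qed
  have cardV: "card V = 2 ^ n - 1"
    unfolding V_def by (simp add: card_Diff_singleton card_Pow)
  have "card (dynamics_set n) = 2 ^ n - 1" using ds inj cardV card_image by metis
  moreover have "(1::nat) \<le> 2 ^ n" by simp
  ultimately have "real (card (dynamics_set n)) = (2::real) ^ n - 1" by (simp add: of_nat_diff)
  then show ?thesis unfolding sensitivity_def by simp
qed

end
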